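(* Let $p$ be a prime, $\Phi:\mathbb{N}\to\mathbb{N}$ strictly increasing, and $f\in\mathcal{F}(\Phi)$. Let $h,n_0,u$ be nonnegative integers with $u<p^{1+\Phi(n_0)}$ and $f(u)\equiv 0\pmod{p^{1+h+n_0}}$. Suppose there is a sequence $(S(n))_{n\ge n_0}$ of sets of integers with $S(n)\subset\big(0,p^{\Phi(n+1)-\Phi(n)}\big)$ and $\operatorname{Card} S(n)=p-1$, such that for all nonnegative integers $n,m$ with $n\ge n_0$, $m<p^{1+\Phi(n)}$ and $m\equiv u\pmod{p^{1+\Phi(n_0)}}$, \[ \big\{\, b(\Phi,f;m+ip^{1+\Phi(n)}) \bmod p^{h+1} \;:\; i\in S(n)\,\big\} = \big\{\, ip^h \bmod p^{h+1} \;:\; i=1,2,\dots,p-1\,\big\}. \] Then there exists $\xi\in\mathbb{Z}_p$ such that (a) $f(\xi)=0$, (b) $\xi\equiv u\pmod{p^{1+\Phi(n_0)}}$, and (c) $\rho(\xi;n+1)\in\{0\}\cup S(n)$ for every $n\ge n_0$. If moreover $b(\Phi,f;m)\equiv 0\pmod{p^h}$ for every integer $m\ge p^{1+\Phi(n_0)}$ with $m\equiv u\pmod{p^{1+\Phi(n_0)}}$, then the $\xi\in\mathbb{Z}_p$ satisfying (a), (b), (c) is unique.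
   Context: $\mathbb{N}=\{0,1,2,\dots\}$. $v_p$, $|\cdot|_p$ are the $p$-adic valuation and absolute value ($v_p(p)=1$, $|p|_p=p^{-1}$). Each $x\in\mathbb{Z}_p$ is written $x=\sum_{i\ge0}x_ip^i$ with digits $x_i\in\{0,\dots,p-1\}$; for a nonnegative integer $m$, $m_i$ are its base-$p$ digits. Set $\Phi(-1):=-1$. $\tau(m)=\tau(\Phi;m):=\min\{h\in\mathbb{N}: m<p^{1+\Phi(h)}\}$. For $m\ge p^{1+\Phi(0)}$, $M(m):=\sum_{i=\Phi(\tau(m)-1)+1}^{\Phi(\tau(m))} m_ip^i$. $B(\Phi,f;m):=f(m)$ if $m<p^{1+\Phi(0)}$ and $B(\Phi,f;m):=f(m)-f(m-M(m))$ otherwise. $\mathcal{F}(\Phi)$ is the class of continuous $f:\mathbb{Z}_p\to\mathbb{Z}_p$ such that for every positive integer $n$ and all $x,y\in\mathbb{Z}_p$: if $|x-y|_p\le p^{-1-\Phi(n-1)}$ then $|f(x)-f(y)|_p\le p^{-n}$. For $f\in\mathcal{F}(\Phi)$ one has $v_p(B(\Phi,f;m))\ge\tau(m)$, and one sets $b(\Phi,f;m):=p^{-\tau(m)}B(\Phi,f;m)\in\mathbb{Z}_p$. For $x\in\mathbb{Z}_p$ and $j\in\mathbb{N}$, $\rho(x;j):=p^{-1-\Phi(j-1)}\sum_{i=1+\Phi(j-1)}^{\Phi(j)}x_ip^i$ (a nonnegative integer). *)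

theory Defs
  imports "HOL-Computational_Algebra.Primes"
begin

text \<open>p-adic integers, represented as compatible sequences of residues:
  x k is the residue of x modulo p^k, in [0, p^k).\<close>

definition zp :: "nat \<Rightarrow> (nat \<Rightarrow> int) set" where
  "zp p = {x. \<forall>k. 0 \<le> x k \<and> x k < int p ^ k \<and> x (Suc k) mod int p ^ k = x k}"

definition zp_of_int :: "nat \<Rightarrow> int \<Rightarrow> (nat \<Rightarrow> int)" where
  "zp_of_int p m = (\<lambda>k. m mod int p ^ k)"

definition zp_zero :: "nat \<Rightarrow> int" where
  "zp_zero = (\<lambda>k. 0)"

definition zp_sub :: "nat \<Rightarrow> (nat \<Rightarrow> int) \<Rightarrow> (nat \<Rightarrow> int) \<Rightarrow> (nat \<Rightarrow> int)" where
  "zp_sub p x y = (\<lambda>k. (x k - y k) mod int p ^ k)"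

text \<open>Division by p^t (exact when v_p(x) \<ge> t).\<close>
definition zp_shift :: "nat \<Rightarrow> nat \<Rightarrow> (nat \<Rightarrow> int) \<Rightarrow> (nat \<Rightarrow> int)" where
  "zp_shift p t x = (\<lambda>k. x (k + t) div int p ^ t)"

definition zp_digit :: "nat \<Rightarrow> (nat \<Rightarrow> int) \<Rightarrow> nat \<Rightarrow> nat" where
  "zp_digit p x i = nat (x (Suc i) div int p ^ i)"

definition nat_digit :: "nat \<Rightarrow> nat \<Rightarrow> nat \<Rightarrow> nat" where
  "nat_digit p m i = m div p ^ i mod p"

text \<open>Continuity of f : Z_p \<rightarrow> Z_p in the p-adic topology
  (|x-y|_p \<le> p^{-l} iff x l = y l).\<close>
definition zp_continuous :: "nat \<Rightarrow> ((nat \<Rightarrow> int) \<Rightarrow> (nat \<Rightarrow> int)) \<Rightarrow> bool" where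
  "zp_continuous p f \<longleftrightarrow>
     (\<forall>x\<in>zp p. \<forall>k. \<exists>l. \<forall>y\<in>zp p. x l = y l \<longrightarrow> f x k = f y k)"

definition classF :: "nat \<Rightarrow> (nat \<Rightarrow> nat) \<Rightarrow> ((nat \<Rightarrow> int) \<Rightarrow> (nat \<Rightarrow> int)) \<Rightarrow> bool" where
  "classF p \<Phi> f \<longleftrightarrow> (\<forall>x\<in>zp p. f x \<in> zp p) \<and> zp_continuous p f \<and>
     (\<forall>n>0. \<forall>x\<in>zp p. \<forall>y\<in>zp p.
        x (1 + \<Phi> (n - 1)) = y (1 + \<Phi> (n - 1)) \<longrightarrow> f x n = f y n)"

definition tau :: "nat \<Rightarrow> (nat \<Rightarrow> nat) \<Rightarrow> nat \<Rightarrow> nat" where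
  "tau p \<Phi> m = (LEAST h. m < p ^ (1 + \<Phi> h))"

text \<open>M(m), used only for m \<ge> p^(1+Phi 0), where tau m \<ge> 1.\<close>
definition Mfun :: "nat \<Rightarrow> (nat \<Rightarrow> nat) \<Rightarrow> nat \<Rightarrow> nat" where
  "Mfun p \<Phi> m = (\<Sum>i\<in>{\<Phi> (tau p \<Phi> m - 1) + 1 .. \<Phi> (tau p \<Phi> m)}. nat_digit p m i * p ^ i)"

definition Bfun :: "nat \<Rightarrow> (nat \<Rightarrow> nat) \<Rightarrow> ((nat \<Rightarrow> int) \<Rightarrow> (nat \<Rightarrow> int)) \<Rightarrow> nat \<Rightarrow> (nat \<Rightarrow> int)" where
  "Bfun p \<Phi> f m =
     (if m < p ^ (1 + \<Phi> 0) then f (zp_of_int p (int m))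
      else zp_sub p (f (zp_of_int p (int m))) (f (zp_of_int p (int (m - Mfun p \<Phi> m)))))"

definition bfun :: "nat \<Rightarrow> (nat \<Rightarrow> nat) \<Rightarrow> ((nat \<Rightarrow> int) \<Rightarrow> (nat \<Rightarrow> int)) \<Rightarrow> nat \<Rightarrow> (nat \<Rightarrow> int)" where
  "bfun p \<Phi> f m = zp_shift p (tau p \<Phi> m) (Bfun p \<Phi> f m)"

text \<open>rho(x;j), with the convention Phi(-1) = -1.\<close>
definition rho :: "nat \<Rightarrow> (nat \<Rightarrow> nat) \<Rightarrow> (nat \<Rightarrow> int) \<Rightarrow> nat \<Rightarrow> nat" where
  "rho p \<Phi> x j =
     (let lo = (if j = 0 then 0 else 1 + \<Phi> (j - 1))
      in (\<Sum>i\<in>{lo .. \<Phi> j}. zp_digit p x i * p ^ i) div p ^ lo)"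

end

theory Submission
  imports Defs
begin


lemma zp_mod:
  assumes "x \<in> zp p" "k \<le> K"
  shows "x K mod int p ^ k = x k"
  using assms(2)
proof (induction K rule: dec_induct)
  case base
  have "0 \<le> x k" "x k < int p ^ k" using assms(1) unfolding zp_def by auto
  then show ?case by simp
next
  case (step K)
  have "x (Suc K) mod int p ^ K = x K" using assms(1) unfolding zp_def by auto
  moreover have "int p ^ k dvd int p ^ K" using step(1) by (simp add: le_imp_power_dvd)
  ultimately show ?case using step(3) by (metis mod_mod_cancel)
qed

lemma zp_bounds:
  assumes "x \<in> zp p" shows "0 \<le> x k" "x k < int p ^ k"
  using assms unfolding zp_def by auto

lemma zp_of_int_in:
  assumes "p > 0" shows "zp_of_int p m \<in> zp p"
proof -
  have "int p ^ k dvd int p ^ Suc k" for k by (simp add: le_imp_power_dvd)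
  then show ?thesis using assms unfolding zp_def zp_of_int_def
    by (auto simp: mod_mod_cancel)
qed

lemma zp_of_int_small:
  assumes "m < p ^ k" shows "zp_of_int p (int m) k = int m"
proof -
  have "int m < int p ^ k" using assms by (metis of_nat_less_iff of_nat_power)
  then show ?thesis unfolding zp_of_int_def by simp
qed

lemma zp_of_int_nat:
  "zp_of_int p (int m) k = int (m mod p ^ k)"
  unfolding zp_of_int_def by (simp add: of_nat_mod)

lemma classF_app:
  assumes "classF p \<Phi> f" "x \<in> zp p" "y \<in> zp p" "x (1 + \<Phi> n) = y (1 + \<Phi> n)"
  shows "f x (Suc n) = f y (Suc n)"
  using assms unfolding classF_def by (metis diff_Suc_1 zero_less_Suc)

lemma classF_in:
  assumes "classF p \<Phi> f" "x \<in> zp p" shows "f x \<in> zp p"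
  using assms unfolding classF_def by auto

lemma nat_digit_sum:
  assumes "a \<le> c"
  shows "(\<Sum>i\<in>{a..<c}. nat_digit p m i * p ^ i) + m mod p ^ a = m mod p ^ c"
  using assms
proof (induction c rule: dec_induct)
  case base then show ?case by simp
next
  case (step c)
  have "m mod p ^ Suc c = p ^ c * (m div p ^ c mod p) + m mod p ^ c"
    by (metis mod_mult2_eq power_Suc2)
  then show ?case using step by (simp add: nat_digit_def algebra_simps)
qed

lemma zp_digit_eq:
  assumes "x \<in> zp p" "p > 0"
  shows "int (zp_digit p x i) * int p ^ i = x (Suc i) - x i"
proof -
  have "x (Suc i) mod int p ^ i = x i" using zp_mod[OF assms(1)] by simp
  moreover have "x (Suc i) div int p ^ i \<ge> 0" using zp_bounds(1)[OF assms(1), of "Suc i"] assms(2)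
    by (simp add: pos_imp_zdiv_nonneg_iff)
  ultimately show ?thesis unfolding zp_digit_def
    by (metis add_diff_cancel_right' minus_mod_eq_mult_div mult.commute nat_0_le)
qed

lemma zp_digit_sum:
  assumes "x \<in> zp p" "p > 0" "a \<le> c"
  shows "int (\<Sum>i\<in>{a..<c}. zp_digit p x i * p ^ i) = x c - x a"
  using assms(3)
proof (induction c rule: dec_induct)
  case base then show ?case by simp
next
  case (step c)
  then show ?case using zp_digit_eq[OF assms(1,2), of c] by simp
qed

lemma rho_eq:
  assumes "x \<in> zp p" "p > 0" "strict_mono \<Phi>"
  shows "x (1 + \<Phi> (Suc n)) = x (1 + \<Phi> n) + int (rho p \<Phi> x (Suc n)) * int p ^ (1 + \<Phi> n)"
proof -
  let ?a = "1 + \<Phi> n" and ?c = "1 + \<Phi> (Suc n)"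
  have ac: "?a \<le> ?c" using assms(3) by (simp add: strict_mono_less_eq)
  have set: "{?a..\<Phi> (Suc n)} = {?a..<?c}" by auto
  define s where "s = (\<Sum>i\<in>{?a..<?c}. zp_digit p x i * p ^ i)"
  have si: "int s = x ?c - x ?a" unfolding s_def using zp_digit_sum[OF assms(1,2) ac] .
  have "x ?c mod int p ^ ?a = x ?a" using zp_mod[OF assms(1) ac] .
  then have dv: "int p ^ ?a dvd x ?c - x ?a" by (metis mod_eq_dvd_iff mod_mod_trivial)
  then obtain q where q: "x ?c - x ?a = int p ^ ?a * q" by blast
  have pp: "int p ^ ?a > 0" using assms(2) by simp
  have "q \<ge> 0" using si q pp by (metis of_nat_0_le_iff zero_le_mult_iff not_less)
  have "rho p \<Phi> x (Suc n) = s div p ^ ?a" unfolding rho_def s_def Let_def using set by simp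
  also have "... = nat q"
  proof -
    have "s = nat (int p ^ ?a * q)" using si q by simp
    then have "s = p ^ ?a * nat q" using \<open>q \<ge> 0\<close> by (simp add: nat_mult_distrib nat_power_eq)
    then show ?thesis using assms(2) by simp
  qed
  finally show ?thesis using q \<open>q \<ge> 0\<close> by (simp add: algebra_simps)
qed




lemma block_facts:
  assumes p: "p > 1" and sm: "strict_mono \<Phi>"
    and x: "x < p ^ (1 + \<Phi> n)" and i0: "0 < i" and i1: "i < p ^ (\<Phi> (Suc n) - \<Phi> n)"
    and m: "m = x + i * p ^ (1 + \<Phi> n)"
  shows "tau p \<Phi> m = Suc n" "m - Mfun p \<Phi> m = x" "p ^ (1 + \<Phi> 0) \<le> m"
    "p ^ (1 + \<Phi> n) \<le> m" "m < p ^ (1 + \<Phi> (Suc n))" "m mod p ^ (1 + \<Phi> n) = x"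
proof -
  let ?q = "p ^ (1 + \<Phi> n)" and ?d = "\<Phi> (Suc n) - \<Phi> n"
  have lt: "\<Phi> n < \<Phi> (Suc n)" using sm by (simp add: strict_mono_def)
  show ge: "?q \<le> m" proof -
    have "?q * 1 \<le> i * ?q" using i0 by simp
    then show ?thesis using m by linarith
  qed
  have "m < ?q * (1 + i)" using m x by (simp add: algebra_simps)
  also have "... \<le> ?q * p ^ ?d" using i1 by (intro mult_le_mono2) simp
  also have "... = p ^ (1 + \<Phi> (Suc n))" using lt by (simp add: power_add[symmetric])
  finally show lt2: "m < p ^ (1 + \<Phi> (Suc n))" .
  have "p ^ (1 + \<Phi> 0) \<le> ?q" using p sm by (simp add: strict_mono_less_eq)
  then show "p ^ (1 + \<Phi> 0) \<le> m" using ge by linarith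
  show mm: "m mod ?q = x" using m x by simp
  show t: "tau p \<Phi> m = Suc n" unfolding tau_def
  proof (rule Least_equality)
    show "m < p ^ (1 + \<Phi> (Suc n))" by (rule lt2)
  next
    fix y assume "m < p ^ (1 + \<Phi> y)"
    show "Suc n \<le> y"
    proof (rule ccontr)
      assume "\<not> Suc n \<le> y"
      then have "y \<le> n" by simp
      then have "p ^ (1 + \<Phi> y) \<le> ?q" using p sm by (simp add: strict_mono_less_eq)
      then show False using ge \<open>m < p ^ (1 + \<Phi> y)\<close> by linarith
    qed
  qed
  have set: "{\<Phi> n + 1..\<Phi> (Suc n)} = {1 + \<Phi> n..<1 + \<Phi> (Suc n)}" by auto
  have "Mfun p \<Phi> m + m mod ?q = m mod p ^ (1 + \<Phi> (Suc n))"
    unfolding Mfun_def t using set nat_digit_sum[of "1 + \<Phi> n" "1 + \<Phi> (Suc n)" p m] lt by simp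
  also have "... = m" using lt2 by simp
  finally show "m - Mfun p \<Phi> m = x" using mm by linarith
qed

lemma relR:
  assumes p: "prime p" and sm: "strict_mono \<Phi>" and F: "classF p \<Phi> f"
    and x: "x < p ^ (1 + \<Phi> n)" and i0: "0 < i" and i1: "i < p ^ (\<Phi> (Suc n) - \<Phi> n)"
    and m: "m = x + i * p ^ (1 + \<Phi> n)" and K: "K = j + Suc n"
  shows "f (zp_of_int p (int m)) K
      = (f (zp_of_int p (int x)) K + int p ^ Suc n * bfun p \<Phi> f m j) mod int p ^ K"
proof -
  have p1: "p > 1" using p prime_gt_1_nat by blast
  note bf = block_facts[OF p1 sm x i0 i1 m]
  let ?a = "f (zp_of_int p (int m))" and ?c = "f (zp_of_int p (int x))"
  have inz: "zp_of_int p (int y) \<in> zp p" for y using p1 by (simp add: zp_of_int_in)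
  have az: "?a \<in> zp p" and cz: "?c \<in> zp p" using classF_in[OF F] inz by auto
  have "zp_of_int p (int m) (1 + \<Phi> n) = zp_of_int p (int x) (1 + \<Phi> n)"
    using bf(6) x by (simp add: zp_of_int_nat)
  then have eq: "?a (Suc n) = ?c (Suc n)" using classF_app[OF F inz inz] by blast
  have "Bfun p \<Phi> f m = zp_sub p ?a ?c" unfolding Bfun_def using bf(3,2) by simp
  then have B: "Bfun p \<Phi> f m K = (?a K - ?c K) mod int p ^ K" unfolding zp_sub_def by simp
  have bfun: "bfun p \<Phi> f m j = Bfun p \<Phi> f m K div int p ^ Suc n"
    unfolding bfun_def zp_shift_def bf(1) K by simp
  have le: "Suc n \<le> K" using K by simp
  have "?a K mod int p ^ Suc n = ?c K mod int p ^ Suc n"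
    using zp_mod[OF az le] zp_mod[OF cz le] eq by simp
  then have d1: "int p ^ Suc n dvd ?a K - ?c K" by (simp add: mod_eq_dvd_iff)
  have d2: "int p ^ Suc n dvd int p ^ K" using le by (metis le_imp_power_dvd)
  have d3: "int p ^ Suc n dvd Bfun p \<Phi> f m K" using B d1 d2 by (simp add: dvd_mod)
  have "int p ^ Suc n * bfun p \<Phi> f m j = Bfun p \<Phi> f m K" using bfun d3 by simp
  then have "(?c K + int p ^ Suc n * bfun p \<Phi> f m j) mod int p ^ K = (?c K + (?a K - ?c K)) mod int p ^ K"
    using B by (simp add: mod_add_right_eq)
  also have "... = ?a K" using zp_bounds[OF az] by simp
  finally show ?thesis by simp
qed




lemma arith_core:
  fixes P c d j :: int
  assumes P: "P > 1" and c0: "0 \<le> c" and c1: "c < P ^ Suc A" and cm: "c mod P ^ A = 0"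
    and A: "A = h + Suc n" and j: "1 \<le> j" "j \<le> P - 1"
  shows "(c + P ^ Suc n * (j * P ^ h)) mod P ^ Suc A = 0 \<longleftrightarrow> j = P - c div P ^ A"
proof -
  define d where "d = c div P ^ A"
  have PA: "P ^ A > 0" using P by simp
  have cd: "c = P ^ A * d" using cm d_def by (metis add.right_neutral mult_div_mod_eq)
  have d0: "0 \<le> d" using c0 PA d_def by (simp add: pos_imp_zdiv_nonneg_iff)
  have d1: "d < P" using c1 cd PA by (simp add: mult.commute)
  have e0: "P ^ A = P ^ Suc n * P ^ h" using A by (simp add: power_add mult.commute)
  have e: "P ^ Suc n * (j * P ^ h) = P ^ A * j" using e0 by (simp add: algebra_simps)
  have "c + P ^ Suc n * (j * P ^ h) = P ^ A * (d + j)" using cd e by (simp add: algebra_simps)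
  moreover have "P ^ Suc A = P ^ A * P" by simp
  ultimately have "(c + P ^ Suc n * (j * P ^ h)) mod P ^ Suc A = (P ^ A * (d + j)) mod (P ^ A * P)"
    by simp
  also have "... = P ^ A * ((d + j) mod P)" by (rule mod_mult_mult1)
  finally have eq: "(c + P ^ Suc n * (j * P ^ h)) mod P ^ Suc A = P ^ A * ((d + j) mod P)" .
  have iff: "(d + j) mod P = 0 \<longleftrightarrow> d + j = P"
  proof
    assume "(d + j) mod P = 0"
    then obtain k where k: "d + j = P * k" by (metis mod_0_imp_dvd dvd_def)
    have "0 < P * k" "P * k < P * 2" using k d0 d1 j by linarith+
    then have "0 < k" using P by (simp add: zero_less_mult_iff)
    have "k < 2" using \<open>P * k < P * 2\<close> P mult_less_cancel_left_pos[of P k 2] by linarith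
    then have "k = 1" using \<open>0 < k\<close> by simp
    then show "d + j = P" using k by simp
  qed simp
  have z: "(c + P ^ Suc n * (j * P ^ h)) mod P ^ Suc A = 0 \<longleftrightarrow> (d + j) mod P = 0"
    using eq PA P by (simp del: power_Suc)
  show ?thesis using z iff by (auto simp: d_def)
qed

lemma img_simp:
  assumes "j \<in> {1..p - 1}" "p > 0"
  shows "(int j * int p ^ h) mod int p ^ (h + 1) = int j * int p ^ h"
proof -
  have "int j < int p" using assms by auto
  then have "int j * int p ^ h < int p * int p ^ h" using assms by simp
  then show ?thesis by (simp add: mult.commute)
qed

context
  fixes p :: nat and \<Phi> :: "nat \<Rightarrow> nat" and f :: "(nat \<Rightarrow> int) \<Rightarrow> (nat \<Rightarrow> int)"
    and h n0 u :: nat and S :: "nat \<Rightarrow> nat set"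
  assumes pr: "prime p"
    and sm: "strict_mono \<Phi>"
    and F: "classF p \<Phi> f"
    and hS: "\<forall>n\<ge>n0. S n \<subseteq> {0<..<p ^ (\<Phi> (n + 1) - \<Phi> n)} \<and> card (S n) = p - 1"
    and hB: "\<forall>n m. n \<ge> n0 \<and> m < p ^ (1 + \<Phi> n) \<and> m mod p ^ (1 + \<Phi> n0) = u mod p ^ (1 + \<Phi> n0) \<longrightarrow>
           (\<lambda>i. bfun p \<Phi> f (m + i * p ^ (1 + \<Phi> n)) (h + 1)) ` S n
           = (\<lambda>i. (int i * int p ^ h) mod int p ^ (h + 1)) ` {1 .. p - 1}"
begin

lemma p1: "p > 1" using pr prime_gt_1_nat by blast

lemma key:
  assumes n: "n \<ge> n0" and x: "x < p ^ (1 + \<Phi> n)"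
    and xu: "x mod p ^ (1 + \<Phi> n0) = u mod p ^ (1 + \<Phi> n0)"
    and fx: "f (zp_of_int p (int x)) (Suc (h + n)) = 0"
    and i: "i \<in> S n"
  shows "f (zp_of_int p (int (x + i * p ^ (1 + \<Phi> n)))) (Suc (Suc (h + n))) = 0
     \<longleftrightarrow> bfun p \<Phi> f (x + i * p ^ (1 + \<Phi> n)) (h + 1)
          = (int p - f (zp_of_int p (int x)) (Suc (Suc (h + n))) div int p ^ (Suc (h + n))) * int p ^ h"
proof -
  let ?m = "x + i * p ^ (1 + \<Phi> n)" and ?c = "f (zp_of_int p (int x)) (Suc (Suc (h + n)))"
  have "i \<in> {0<..<p ^ (\<Phi> (n + 1) - \<Phi> n)}" using hS n i by blast
  then have iS: "0 < i" "i < p ^ (\<Phi> (Suc n) - \<Phi> n)" by auto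
  have "bfun p \<Phi> f ?m (h + 1) \<in> (\<lambda>i. (int i * int p ^ h) mod int p ^ (h + 1)) ` {1 .. p - 1}"
    using hB n x xu i by blast
  then obtain j where j: "j \<in> {1..p-1}" "bfun p \<Phi> f ?m (h + 1) = int j * int p ^ h"
    using img_simp p1 by auto
  have R: "f (zp_of_int p (int ?m)) (Suc (Suc (h + n))) = (?c + int p ^ Suc n * bfun p \<Phi> f ?m (h + 1)) mod int p ^ Suc (Suc (h + n))"
    by (rule relR[OF pr sm F x iS refl]) simp
  have czin: "f (zp_of_int p (int x)) \<in> zp p" by (rule classF_in[OF F zp_of_int_in]) (use p1 in simp)
    have cz: "?c \<in> {0..<int p ^ Suc (Suc (h+n))}" using zp_bounds(1)[OF czin, where k="Suc (Suc (h+n))"] zp_bounds(2)[OF czin, where k="Suc (Suc (h+n))"] by simp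
  have cm: "?c mod int p ^ (h + Suc n) = 0"
    using zp_mod[OF czin, where k="Suc (h + n)" and K="Suc (Suc (h+n))"] fx by simp
  have ac: "(?c + int p ^ Suc n * (int j * int p ^ h)) mod int p ^ Suc (h + Suc n) = 0 \<longleftrightarrow> int j = int p - ?c div int p ^ (h + Suc n)"
    by (rule arith_core) (use p1 cz cm j in auto)
  have R': "f (zp_of_int p (int ?m)) (Suc (Suc (h + n))) = (?c + int p ^ Suc n * (int j * int p ^ h)) mod int p ^ Suc (h + Suc n)"
    using R j(2) by simp
  have "bfun p \<Phi> f ?m (h + 1) = (int p - ?c div int p ^ (Suc (h + n))) * int p ^ h
     \<longleftrightarrow> int j = int p - ?c div int p ^ (h + Suc n)" using j(2) p1 by simp
  then show ?thesis using R' ac by simp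
qed

lemma step_exist:
  assumes n: "n \<ge> n0" and x: "x < p ^ (1 + \<Phi> n)"
    and xu: "x mod p ^ (1 + \<Phi> n0) = u mod p ^ (1 + \<Phi> n0)"
    and fx: "f (zp_of_int p (int x)) (Suc (h + n)) = 0"
  shows "\<exists>i\<in>insert 0 (S n). f (zp_of_int p (int (x + i * p ^ (1 + \<Phi> n)))) (Suc (Suc (h + n))) = 0"
proof -
  let ?c = "f (zp_of_int p (int x)) (Suc (Suc (h + n)))"
  define d where "d = ?c div int p ^ (Suc (h + n))"
  show ?thesis
  proof (cases "d = 0")
    case True
    have czin: "f (zp_of_int p (int x)) \<in> zp p" by (rule classF_in[OF F zp_of_int_in]) (use p1 in simp)
    have cz: "?c \<in> {0..<int p ^ Suc (Suc (h+n))}" using zp_bounds(1)[OF czin, where k="Suc (Suc (h+n))"] zp_bounds(2)[OF czin, where k="Suc (Suc (h+n))"] by simp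
    have cm: "?c mod int p ^ Suc (h + n) = 0"
      using zp_mod[OF czin, where k="Suc (h + n)" and K="Suc (Suc (h+n))"] fx by simp
    have "?c = 0" using True cm d_def by (metis add.right_neutral mult_div_mod_eq mult_zero_right)
    then show ?thesis by auto
  next
    case False
    have czin: "f (zp_of_int p (int x)) \<in> zp p" by (rule classF_in[OF F zp_of_int_in]) (use p1 in simp)
    have cz: "?c \<in> {0..<int p ^ Suc (Suc (h+n))}" using zp_bounds(1)[OF czin, where k="Suc (Suc (h+n))"] zp_bounds(2)[OF czin, where k="Suc (Suc (h+n))"] by simp
    have d0: "d \<ge> 0" using cz p1 d_def by (simp add: pos_imp_zdiv_nonneg_iff)
    have d1: "d < int p"
    proof -
      have e: "?c = int p ^ Suc (h + n) * d + ?c mod int p ^ Suc (h + n)" using d_def by simp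
      have "?c mod int p ^ Suc (h + n) \<ge> 0" using p1 by simp
      then have "int p ^ Suc (h + n) * d \<le> ?c" using e by linarith
      also have "... < int p ^ Suc (h + n) * int p" using cz by (simp add: mult.commute)
      finally show ?thesis using p1 by (simp add: mult_less_cancel_left_pos)
    qed
    define j where "j = p - nat d"
    have j: "j \<in> {1..p-1}" using False d0 d1 j_def by auto
    have "int j * int p ^ h mod int p ^ (h + 1) \<in> (\<lambda>i. bfun p \<Phi> f (x + i * p ^ (1 + \<Phi> n)) (h + 1)) ` S n"
      using hB n x xu j by blast
    then have "int j * int p ^ h \<in> (\<lambda>i. bfun p \<Phi> f (x + i * p ^ (1 + \<Phi> n)) (h + 1)) ` S n"
      using img_simp[OF j] p1 by (simp add: ac_simps)
    then obtain i where i: "i \<in> S n" "bfun p \<Phi> f (x + i * p ^ (1 + \<Phi> n)) (h + 1) = int j * int p ^ h"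
      by (metis (no_types, lifting) imageE)
    have "int j = int p - d" using j_def d0 d1 by simp
    then have "f (zp_of_int p (int (x + i * p ^ (1 + \<Phi> n)))) (Suc (Suc (h + n))) = 0"
      using key[OF n x xu fx i(1)] i(2) d_def by simp
    then show ?thesis using i(1) by blast
  qed
qed

end



lemma addmul_mod:
  fixes a i q r :: nat
  assumes "r dvd q" shows "(a + i * q) mod r = a mod r"
proof -
  obtain t where "q = r * t" using assms by blast
  then have "a + i * q = a + (i * t) * r" by simp
  then show ?thesis by (metis mod_mult_self1)
qed

lemma Phi_leD: "strict_mono (\<Phi>::nat\<Rightarrow>nat) \<Longrightarrow> a \<le> b \<Longrightarrow> \<Phi> a \<le> \<Phi> b"
  by (erule monoD[OF strict_mono_mono])

lemma pow_dvd_Phi: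
  fixes \<Phi> :: "nat \<Rightarrow> nat"
  assumes "strict_mono \<Phi>" "a \<le> b"
  shows "(p::nat) ^ (1 + \<Phi> a) dvd p ^ (1 + \<Phi> b)"
  using assms by (intro le_imp_power_dvd) (simp add: Phi_leD[OF assms])

context
  fixes p :: nat and \<Phi> :: "nat \<Rightarrow> nat" and f :: "(nat \<Rightarrow> int) \<Rightarrow> (nat \<Rightarrow> int)"
    and h n0 u :: nat and S :: "nat \<Rightarrow> nat set"
  assumes pr: "prime p"
    and sm: "strict_mono \<Phi>"
    and F: "classF p \<Phi> f"
    and hS: "\<forall>n\<ge>n0. S n \<subseteq> {0<..<p ^ (\<Phi> (n + 1) - \<Phi> n)} \<and> card (S n) = p - 1"
    and hB: "\<forall>n m. n \<ge> n0 \<and> m < p ^ (1 + \<Phi> n) \<and> m mod p ^ (1 + \<Phi> n0) = u mod p ^ (1 + \<Phi> n0) \<longrightarrow>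
           (\<lambda>i. bfun p \<Phi> f (m + i * p ^ (1 + \<Phi> n)) (h + 1)) ` S n
           = (\<lambda>i. (int i * int p ^ h) mod int p ^ (h + 1)) ` {1 .. p - 1}"
begin

lemma pp1: "p > 1" using pr prime_gt_1_nat by blast

lemma Sbound:
  assumes "n \<ge> n0" "i \<in> S n" shows "0 < i" "i < p ^ (\<Phi> (Suc n) - \<Phi> n)"
proof -
  have "i \<in> {0<..<p ^ (\<Phi> (n + 1) - \<Phi> n)}" using hS assms by blast
  then show "0 < i" "i < p ^ (\<Phi> (Suc n) - \<Phi> n)" by auto
qed

lemma existence:
  assumes u: "u < p ^ (1 + \<Phi> n0)"
    and fu: "f (zp_of_int p (int u)) (1 + h + n0) = 0"
  shows "\<exists>\<xi>\<in>zp p. f \<xi> = zp_zero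
            \<and> \<xi> (1 + \<Phi> n0) = int u mod int p ^ (1 + \<Phi> n0)
            \<and> (\<forall>n\<ge>n0. rho p \<Phi> \<xi> (n + 1) \<in> insert 0 (S n))"
proof -
  define P where "P n x i \<longleftrightarrow> i \<in> insert 0 (S n) \<and> f (zp_of_int p (int (x + i * p ^ (1 + \<Phi> n)))) (Suc (Suc (h + n))) = 0" for n x i
  define st where "st n x = (SOME i. P n x i)" for n x
  define xs where "xs = rec_nat u (\<lambda>k x. x + st (n0 + k) x * p ^ (1 + \<Phi> (n0 + k)))"
  have xs0: "xs 0 = u" by (simp add: xs_def)
  have xsS: "xs (Suc k) = xs k + st (n0 + k) (xs k) * p ^ (1 + \<Phi> (n0 + k))" for k by (simp add: xs_def)
  have inv: "xs k < p ^ (1 + \<Phi> (n0 + k)) \<and> xs k mod p ^ (1 + \<Phi> n0) = u mod p ^ (1 + \<Phi> n0)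
      \<and> f (zp_of_int p (int (xs k))) (Suc (h + (n0 + k))) = 0" for k
  proof (induction k)
    case 0 then show ?case using u fu xs0 by simp
  next
    case (Suc k)
    let ?n = "n0 + k" and ?x = "xs k"
    have "\<exists>i. P ?n ?x i" unfolding P_def using step_exist[OF pr sm F hS hB, of ?n ?x] Suc by auto
    then have Pi: "P ?n ?x (st ?n ?x)" unfolding st_def by (rule someI_ex)
    let ?i = "st ?n ?x"
    have b: "xs (Suc k) < p ^ (1 + \<Phi> (n0 + Suc k))"
    proof (cases "?i = 0")
      case True
      have a: "p ^ (1 + \<Phi> ?n) \<le> p ^ (1 + \<Phi> (n0 + Suc k))"
        by (rule power_increasing) (use pp1 sm in \<open>simp_all add: Phi_leD\<close>)
      have b: "xs (Suc k) = xs k" using True xsS by simp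
      have c: "xs k < p ^ (1 + \<Phi> ?n)" using Suc.IH by blast
      show ?thesis using a b c by linarith
    next
      case False
      then have "?i \<in> S ?n" using Pi P_def by auto
      note sb = Sbound[OF _ this]
      show ?thesis using block_facts(5)[OF pp1 sm _ sb xsS[of k]] Suc by simp
    qed
    have m: "xs (Suc k) mod p ^ (1 + \<Phi> n0) = u mod p ^ (1 + \<Phi> n0)"
      using xsS[of k] addmul_mod[OF pow_dvd_Phi[OF sm, of n0 ?n]] Suc by simp
    have "f (zp_of_int p (int (xs (Suc k)))) (Suc (Suc (h + ?n))) = 0" using Pi xsS[of k] P_def by simp
    then show ?case using b m by simp
  qed
  have stP: "P (n0 + k) (xs k) (st (n0 + k) (xs k))" for k
  proof -
    have "\<exists>i. P (n0 + k) (xs k) i" unfolding P_def using step_exist[OF pr sm F hS hB, of "n0 + k" "xs k"] inv[of k] by auto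
    then show ?thesis unfolding st_def by (rule someI_ex)
  qed
  have mono: "xs k' mod p ^ (1 + \<Phi> (n0 + k)) = xs k" if "k \<le> k'" for k k'
    using that
  proof (induction k' rule: dec_induct)
    case base then show ?case using inv[of k] by simp
  next
    case (step k')
    have "xs (Suc k') mod p ^ (1 + \<Phi> (n0 + k)) = xs k' mod p ^ (1 + \<Phi> (n0 + k))"
      using xsS[of k'] addmul_mod[OF pow_dvd_Phi[OF sm, of "n0 + k" "n0 + k'"]] step(1) by simp
    then show ?case using step(3) by simp
  qed
  define \<xi> where "\<xi> = (\<lambda>k. int (xs k mod p ^ k))"
  have kle: "k \<le> 1 + \<Phi> (n0 + k)" for k using strict_mono_imp_increasing[OF sm, of "n0 + k"] by simp
  have xiC: "\<xi> (1 + \<Phi> (n0 + k)) = int (xs k)" for k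
    unfolding \<xi>_def using mono[OF kle[of k]] by simp
  have xiZ: "\<xi> \<in> zp p"
    unfolding zp_def
  proof (intro CollectI allI conjI)
    fix k
    show "0 \<le> \<xi> k" unfolding \<xi>_def by simp
    have "xs k mod p ^ k < p ^ k" using pp1 by simp
    then show "\<xi> k < int p ^ k" unfolding \<xi>_def by (metis of_nat_less_iff of_nat_power)
    have d1: "p ^ k dvd p ^ Suc k" by (simp add: le_imp_power_dvd)
    have d2: "p ^ k dvd p ^ (1 + \<Phi> (n0 + k))" using kle[of k] by (metis le_imp_power_dvd)
    have "xs (Suc k) mod p ^ Suc k mod p ^ k = xs (Suc k) mod p ^ k" using d1 by (simp add: mod_mod_cancel)
    also have "... = xs (Suc k) mod p ^ (1 + \<Phi> (n0 + k)) mod p ^ k" using d2 by (simp add: mod_mod_cancel)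
    also have "... = xs k mod p ^ k" using mono[of k "Suc k"] by simp
    finally show "\<xi> (Suc k) mod int p ^ k = \<xi> k" unfolding \<xi>_def by (metis of_nat_mod of_nat_power)
  qed
  have fz: "f \<xi> = zp_zero"
  proof
    fix k
    let ?N = "n0 + k"
    have inz: "zp_of_int p (int (xs k)) \<in> zp p" using pp1 by (simp add: zp_of_int_in)
    have "\<xi> (1 + \<Phi> ?N) = zp_of_int p (int (xs k)) (1 + \<Phi> ?N)"
      using xiC[of k] zp_of_int_small inv[of k] by simp
    then have e1: "f \<xi> (Suc ?N) = f (zp_of_int p (int (xs k))) (Suc ?N)" using classF_app[OF F xiZ inz] by blast
    have e2: "f (zp_of_int p (int (xs k))) (Suc ?N) = 0"
      using zp_mod[OF classF_in[OF F inz], where k="Suc ?N" and K="Suc (h + ?N)"] inv[of k] by simp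
    have "f \<xi> k = f \<xi> (Suc ?N) mod int p ^ k" using zp_mod[OF classF_in[OF F xiZ], where k=k and K="Suc ?N"] by simp
    then show "f \<xi> k = zp_zero k" using e1 e2 by (simp add: zp_zero_def)
  qed
  have x0: "\<xi> (1 + \<Phi> n0) = int u mod int p ^ (1 + \<Phi> n0)"
  proof -
    have "\<xi> (1 + \<Phi> n0) = int u" using xiC[of 0] xs0 by simp
    moreover have "int u < int p ^ (1 + \<Phi> n0)" using u by (metis of_nat_less_iff of_nat_power)
    ultimately show ?thesis by simp
  qed
  have rh: "rho p \<Phi> \<xi> (n + 1) \<in> insert 0 (S n)" if n: "n \<ge> n0" for n
  proof -
    obtain k where k: "n = n0 + k" using n le_Suc_ex by blast
    have "\<xi> (1 + \<Phi> (Suc n)) = \<xi> (1 + \<Phi> n) + int (rho p \<Phi> \<xi> (Suc n)) * int p ^ (1 + \<Phi> n)"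
      using rho_eq[OF xiZ _ sm] pp1 by simp
    then have "int (xs (Suc k)) = int (xs k) + int (rho p \<Phi> \<xi> (Suc n)) * int p ^ (1 + \<Phi> n)"
      using xiC[of k] xiC[of "Suc k"] k by simp
    then have "int (st n (xs k)) * int p ^ (1 + \<Phi> n) = int (rho p \<Phi> \<xi> (Suc n)) * int p ^ (1 + \<Phi> n)"
      using xsS[of k] k by simp
    then have "st n (xs k) = rho p \<Phi> \<xi> (Suc n)" using pp1 by simp
    then show ?thesis using stP[of k] k P_def by simp
  qed
  show ?thesis using xiZ fz x0 rh by blast
qed

end



context
  fixes p :: nat and \<Phi> :: "nat \<Rightarrow> nat" and f :: "(nat \<Rightarrow> int) \<Rightarrow> (nat \<Rightarrow> int)"
    and h n0 u :: nat and S :: "nat \<Rightarrow> nat set"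
  assumes pr: "prime p"
    and sm: "strict_mono \<Phi>"
    and F: "classF p \<Phi> f"
    and hS: "\<forall>n\<ge>n0. S n \<subseteq> {0<..<p ^ (\<Phi> (n + 1) - \<Phi> n)} \<and> card (S n) = p - 1"
    and hB: "\<forall>n m. n \<ge> n0 \<and> m < p ^ (1 + \<Phi> n) \<and> m mod p ^ (1 + \<Phi> n0) = u mod p ^ (1 + \<Phi> n0) \<longrightarrow>
           (\<lambda>i. bfun p \<Phi> f (m + i * p ^ (1 + \<Phi> n)) (h + 1)) ` S n
           = (\<lambda>i. (int i * int p ^ h) mod int p ^ (h + 1)) ` {1 .. p - 1}"
    and hH: "\<forall>m. m \<ge> p ^ (1 + \<Phi> n0) \<and> m mod p ^ (1 + \<Phi> n0) = u mod p ^ (1 + \<Phi> n0) \<longrightarrow>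
              bfun p \<Phi> f m h = 0"
begin

lemma ppp1: "p > 1" using pr prime_gt_1_nat by blast

lemma inj_b:
  assumes n: "n \<ge> n0" and x: "x < p ^ (1 + \<Phi> n)"
    and xu: "x mod p ^ (1 + \<Phi> n0) = u mod p ^ (1 + \<Phi> n0)"
  shows "inj_on (\<lambda>i. bfun p \<Phi> f (x + i * p ^ (1 + \<Phi> n)) (h + 1)) (S n)"
proof (rule eq_card_imp_inj_on)
  have c: "card (S n) = p - 1" using hS n by blast
  then have "card (S n) > 0" using ppp1 by simp
  then show "finite (S n)" by (rule card_ge_0_finite)
  have "inj_on (\<lambda>i. (int i * int p ^ h) mod int p ^ (h + 1)) {1 .. p - 1}"
  proof (rule inj_onI)
    fix a b assume a: "a \<in> {1..p-1}" and b: "b \<in> {1..p-1}"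
      and e: "(int a * int p ^ h) mod int p ^ (h + 1) = (int b * int p ^ h) mod int p ^ (h + 1)"
    then have "int a * int p ^ h = int b * int p ^ h" using img_simp[OF a] img_simp[OF b] ppp1 by simp
    then show "a = b" using ppp1 by simp
  qed
  then have cT: "card ((\<lambda>i. (int i * int p ^ h) mod int p ^ (h + 1)) ` {1 .. p - 1}) = p - 1"
    by (simp add: card_image)
  show "card ((\<lambda>i. bfun p \<Phi> f (x + i * p ^ (1 + \<Phi> n)) (h + 1)) ` S n) = card (S n)"
  proof -
    have "(\<lambda>i. bfun p \<Phi> f (x + i * p ^ (1 + \<Phi> n)) (h + 1)) ` S n = (\<lambda>i. (int i * int p ^ h) mod int p ^ (h + 1)) ` {1 .. p - 1}"
      using hB n x xu by blast
    then show ?thesis using c cT by simp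
  qed
qed

lemma b_lt:
  assumes n: "n \<ge> n0" and x: "x < p ^ (1 + \<Phi> n)"
    and xu: "x mod p ^ (1 + \<Phi> n0) = u mod p ^ (1 + \<Phi> n0)" and i: "i \<in> S n"
  shows "bfun p \<Phi> f (x + i * p ^ (1 + \<Phi> n)) (h + 1) < int p ^ (h + 1)"
proof -
  have "bfun p \<Phi> f (x + i * p ^ (1 + \<Phi> n)) (h + 1) \<in> (\<lambda>i. (int i * int p ^ h) mod int p ^ (h + 1)) ` {1 .. p - 1}"
    using hB n x xu i by blast
  then obtain j where "bfun p \<Phi> f (x + i * p ^ (1 + \<Phi> n)) (h + 1) = (int j * int p ^ h) mod int p ^ (h + 1)" by blast
  moreover have "(int j * int p ^ h) mod int p ^ (h + 1) < int p ^ (h + 1)" using ppp1 by (intro pos_mod_bound) simp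
  ultimately show ?thesis by simp
qed

lemma sol_facts:
  assumes xz: "\<xi> \<in> zp p" and fz: "f \<xi> = zp_zero"
    and x0: "\<xi> (1 + \<Phi> n0) = int u mod int p ^ (1 + \<Phi> n0)"
    and rh: "\<forall>n\<ge>n0. rho p \<Phi> \<xi> (n + 1) \<in> insert 0 (S n)"
  shows "\<And>n. int (nat (\<xi> (1 + \<Phi> n))) = \<xi> (1 + \<Phi> n)"
    "\<And>n. nat (\<xi> (1 + \<Phi> n)) < p ^ (1 + \<Phi> n)"
    "\<And>n. n \<ge> n0 \<Longrightarrow> nat (\<xi> (1 + \<Phi> n)) mod p ^ (1 + \<Phi> n0) = u mod p ^ (1 + \<Phi> n0)"
    "\<And>n. n \<ge> n0 \<Longrightarrow> nat (\<xi> (1 + \<Phi> (Suc n))) = nat (\<xi> (1 + \<Phi> n)) + rho p \<Phi> \<xi> (Suc n) * p ^ (1 + \<Phi> n)"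
    "\<And>n. n \<ge> n0 \<Longrightarrow> rho p \<Phi> \<xi> (Suc n) \<in> insert 0 (S n)"
    "\<And>n. n \<ge> n0 \<Longrightarrow> f (zp_of_int p (int (nat (\<xi> (1 + \<Phi> n))))) (Suc (h + n)) = 0"
proof -
  define X where "X n = nat (\<xi> (1 + \<Phi> n))" for n
  have Xa: "int (X n) = \<xi> (1 + \<Phi> n)" for n unfolding X_def using zp_bounds(1)[OF xz] by simp
  have Xb: "X n < p ^ (1 + \<Phi> n)" for n
  proof -
    have "int (X n) < int p ^ (1 + \<Phi> n)" using Xa[of n] zp_bounds(2)[OF xz, where k="1 + \<Phi> n"] by simp
    then show ?thesis by (metis of_nat_less_iff of_nat_power)
  qed
  have Xc: "X n mod p ^ (1 + \<Phi> n0) = u mod p ^ (1 + \<Phi> n0)" if n: "n \<ge> n0" for n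
  proof -
    have le: "1 + \<Phi> n0 \<le> 1 + \<Phi> n" using Phi_leD[OF sm n] by simp
    have "int (X n mod p ^ (1 + \<Phi> n0)) = \<xi> (1 + \<Phi> n) mod int p ^ (1 + \<Phi> n0)"
      using Xa by (simp add: of_nat_mod)
    also have "... = int (u mod p ^ (1 + \<Phi> n0))" using zp_mod[OF xz le] x0 by (simp add: of_nat_mod)
    finally show ?thesis by simp
  qed
  have Xd: "X (Suc n) = X n + rho p \<Phi> \<xi> (Suc n) * p ^ (1 + \<Phi> n)" for n
  proof -
    have "int (X (Suc n)) = int (X n + rho p \<Phi> \<xi> (Suc n) * p ^ (1 + \<Phi> n))"
      using rho_eq[OF xz _ sm, of n] ppp1 Xa by simp
    then show ?thesis using of_nat_eq_iff by blast
  qed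
  have Xe: "rho p \<Phi> \<xi> (Suc n) \<in> insert 0 (S n)" if "n \<ge> n0" for n using rh that by simp
  have inz: "zp_of_int p (int y) \<in> zp p" for y using ppp1 by (simp add: zp_of_int_in)
  have inz2: "f (zp_of_int p (int y)) \<in> zp p" for y using classF_in[OF F inz] .
  have U3: "f (zp_of_int p (int (X N))) (Suc (h + n)) = f (zp_of_int p (int (X n))) (Suc (h + n))"
    if n: "n \<ge> n0" and N: "n \<le> N" for n N
    using N
  proof (induction N rule: dec_induct)
    case base then show ?case by simp
  next
    case (step N)
    let ?i = "rho p \<Phi> \<xi> (Suc N)"
    show ?case
    proof (cases "?i = 0")
      case True then show ?thesis using Xd[of N] step by simp
    next
      case False
      have Nn0: "N \<ge> n0" using n step(1) by linarith
      have iS: "?i \<in> S N" using Xe[OF Nn0] False by simp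
      note sb = Sbound[OF pr sm F hS hB Nn0 iS]
      let ?m = "X N + ?i * p ^ (1 + \<Phi> N)"
      let ?K = "h + Suc N"
      have R: "f (zp_of_int p (int ?m)) ?K = (f (zp_of_int p (int (X N))) ?K + int p ^ Suc N * bfun p \<Phi> f ?m h) mod int p ^ ?K"
        by (rule relR[OF pr sm F Xb sb refl refl])
      have "p ^ (1 + \<Phi> n0) \<le> p ^ (1 + \<Phi> N)"
        by (rule power_increasing) (use ppp1 Phi_leD[OF sm Nn0] in simp_all)
      moreover have "p ^ (1 + \<Phi> N) \<le> ?m" using block_facts(4)[OF ppp1 sm Xb sb refl] .
      moreover have "?m mod p ^ (1 + \<Phi> n0) = u mod p ^ (1 + \<Phi> n0)"
        using addmul_mod[OF pow_dvd_Phi[OF sm Nn0]] Xc[OF Nn0] by simp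
      ultimately have "p ^ (1 + \<Phi> n0) \<le> ?m \<and> ?m mod p ^ (1 + \<Phi> n0) = u mod p ^ (1 + \<Phi> n0)" by linarith
      then have "bfun p \<Phi> f ?m h = 0" using hH by blast
      then have "f (zp_of_int p (int ?m)) ?K = f (zp_of_int p (int (X N))) ?K"
        using R zp_bounds(1)[OF inz2[of "X N"], where k="h + Suc N"] zp_bounds(2)[OF inz2[of "X N"], where k="h + Suc N"] by simp
      moreover have "X (Suc N) = ?m" using Xd by simp
      moreover have le: "Suc (h + n) \<le> ?K" using step(1) by simp
      ultimately have "f (zp_of_int p (int (X (Suc N)))) (Suc (h + n)) = f (zp_of_int p (int (X N))) (Suc (h + n))"
        using zp_mod[OF inz2 le, of "X (Suc N)"] zp_mod[OF inz2 le, of "X N"] by simp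
      then show ?thesis using step(3) by simp
    qed
  qed
  have U4: "f (zp_of_int p (int (X n))) (Suc (h + n)) = 0" if n: "n \<ge> n0" for n
  proof -
    let ?N = "h + n"
    have "\<xi> (1 + \<Phi> ?N) = zp_of_int p (int (X ?N)) (1 + \<Phi> ?N)" using Xa[of ?N] zp_of_int_small[OF Xb[of ?N]] by simp
    then have "f \<xi> (Suc ?N) = f (zp_of_int p (int (X ?N))) (Suc ?N)" using classF_app[OF F xz inz] by blast
    then have "f (zp_of_int p (int (X ?N))) (Suc (h + n)) = 0" using fz by (simp add: zp_zero_def)
    then show ?thesis using U3[OF n, of ?N] by simp
  qed
  show "\<And>n. int (nat (\<xi> (1 + \<Phi> n))) = \<xi> (1 + \<Phi> n)" using Xa X_def by simp
  show "\<And>n. nat (\<xi> (1 + \<Phi> n)) < p ^ (1 + \<Phi> n)" using Xb X_def by simp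
  show "\<And>n. n \<ge> n0 \<Longrightarrow> nat (\<xi> (1 + \<Phi> n)) mod p ^ (1 + \<Phi> n0) = u mod p ^ (1 + \<Phi> n0)" using Xc X_def by simp
  show "\<And>n. n \<ge> n0 \<Longrightarrow> nat (\<xi> (1 + \<Phi> (Suc n))) = nat (\<xi> (1 + \<Phi> n)) + rho p \<Phi> \<xi> (Suc n) * p ^ (1 + \<Phi> n)"
    using Xd X_def by simp
  show "\<And>n. n \<ge> n0 \<Longrightarrow> rho p \<Phi> \<xi> (Suc n) \<in> insert 0 (S n)" using Xe by simp
  show "\<And>n. n \<ge> n0 \<Longrightarrow> f (zp_of_int p (int (nat (\<xi> (1 + \<Phi> n))))) (Suc (h + n)) = 0" using U4 X_def by simp
qed

lemma claim:
  assumes n: "n \<ge> n0" and x: "x < p ^ (1 + \<Phi> n)"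
    and xu: "x mod p ^ (1 + \<Phi> n0) = u mod p ^ (1 + \<Phi> n0)"
    and fx: "f (zp_of_int p (int x)) (Suc (h + n)) = 0"
    and i: "i \<in> insert 0 (S n)"
    and fm: "f (zp_of_int p (int (x + i * p ^ (1 + \<Phi> n)))) (Suc (Suc (h + n))) = 0"
  shows "(i = 0 \<longleftrightarrow> f (zp_of_int p (int x)) (Suc (Suc (h + n))) div int p ^ Suc (h + n) = 0)
    \<and> (i \<noteq> 0 \<longrightarrow> bfun p \<Phi> f (x + i * p ^ (1 + \<Phi> n)) (h + 1)
          = (int p - f (zp_of_int p (int x)) (Suc (Suc (h + n))) div int p ^ (Suc (h + n))) * int p ^ h)"
proof (cases "i = 0")
  case True
  then show ?thesis using fm by simp
next
  case False
  then have iS: "i \<in> S n" using i by simp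
  have b: "bfun p \<Phi> f (x + i * p ^ (1 + \<Phi> n)) (h + 1)
          = (int p - f (zp_of_int p (int x)) (Suc (Suc (h + n))) div int p ^ (Suc (h + n))) * int p ^ h"
    using key[OF pr sm F hS hB n x xu fx iS] fm by simp
  have lt: "bfun p \<Phi> f (x + i * p ^ (1 + \<Phi> n)) (h + 1) < int p ^ (h + 1)"
    using b_lt[OF n x xu iS] .
  have "f (zp_of_int p (int x)) (Suc (Suc (h + n))) div int p ^ Suc (h + n) \<noteq> 0"
  proof
    assume "f (zp_of_int p (int x)) (Suc (Suc (h + n))) div int p ^ Suc (h + n) = 0"
    then have "bfun p \<Phi> f (x + i * p ^ (1 + \<Phi> n)) (h + 1) = int p ^ (h + 1)" using b by simp
    then show False using lt by simp
  qed
  then show ?thesis using False b by simp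
qed

lemma uniq:
  assumes xz: "\<xi> \<in> zp p" and fz: "f \<xi> = zp_zero"
    and x0: "\<xi> (1 + \<Phi> n0) = int u mod int p ^ (1 + \<Phi> n0)"
    and rh: "\<forall>n\<ge>n0. rho p \<Phi> \<xi> (n + 1) \<in> insert 0 (S n)"
    and xz': "\<xi>' \<in> zp p" and fz': "f \<xi>' = zp_zero"
    and x0': "\<xi>' (1 + \<Phi> n0) = int u mod int p ^ (1 + \<Phi> n0)"
    and rh': "\<forall>n\<ge>n0. rho p \<Phi> \<xi>' (n + 1) \<in> insert 0 (S n)"
  shows "\<xi> = \<xi>'"
proof -
  note A = sol_facts[OF xz fz x0 rh]
  note B = sol_facts[OF xz' fz' x0' rh']
  define X where "X n = nat (\<xi> (1 + \<Phi> n))" for n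
  define Y where "Y n = nat (\<xi>' (1 + \<Phi> n))" for n
  have eqn: "X n = Y n" if "n \<ge> n0" for n
    using that
  proof (induction n rule: dec_induct)
    case base
    have "int (X n0) = int (Y n0)" unfolding X_def Y_def using A(1)[of n0] B(1)[of n0] x0 x0' by simp
    then show ?case by simp
  next
    case (step n)
    let ?x = "X n" and ?q = "p ^ (1 + \<Phi> n)"
    let ?i = "rho p \<Phi> \<xi> (Suc n)" and ?j = "rho p \<Phi> \<xi>' (Suc n)"
    have hX: "X (Suc n) = ?x + ?i * ?q" unfolding X_def by (rule A(4)[OF step(1)])
    have hY0: "Y (Suc n) = Y n + ?j * ?q" unfolding Y_def by (rule B(4)[OF step(1)])
    have hY: "Y (Suc n) = ?x + ?j * ?q" using hY0 step(3) by simp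
    have xb: "?x < ?q" unfolding X_def by (rule A(2))
    have xu: "?x mod p ^ (1 + \<Phi> n0) = u mod p ^ (1 + \<Phi> n0)" unfolding X_def by (rule A(3)[OF step(1)])
    have fx: "f (zp_of_int p (int ?x)) (Suc (h + n)) = 0" unfolding X_def by (rule A(6)[OF step(1)])
    have sn: "Suc n \<ge> n0" using step(1) by simp
    have fi0: "f (zp_of_int p (int (X (Suc n)))) (Suc (h + Suc n)) = 0" unfolding X_def by (rule A(6)[OF sn])
    have fi: "f (zp_of_int p (int (?x + ?i * ?q))) (Suc (Suc (h + n))) = 0"
      using fi0 unfolding hX by simp
    have fj0: "f (zp_of_int p (int (Y (Suc n)))) (Suc (h + Suc n)) = 0" unfolding Y_def by (rule B(6)[OF sn])
    have fj: "f (zp_of_int p (int (?x + ?j * ?q))) (Suc (Suc (h + n))) = 0"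
      using fj0 unfolding hY by simp
    let ?D = "f (zp_of_int p (int ?x)) (Suc (Suc (h + n))) div int p ^ Suc (h + n)"
    let ?E = "(int p - f (zp_of_int p (int ?x)) (Suc (Suc (h + n))) div int p ^ (Suc (h + n))) * int p ^ h"
    have ci: "(?i = 0 \<longleftrightarrow> ?D = 0) \<and> (?i \<noteq> 0 \<longrightarrow> bfun p \<Phi> f (?x + ?i * ?q) (h + 1) = ?E)"
      by (rule claim[OF step(1) xb xu fx A(5)[OF step(1)] fi])
    have cj: "(?j = 0 \<longleftrightarrow> ?D = 0) \<and> (?j \<noteq> 0 \<longrightarrow> bfun p \<Phi> f (?x + ?j * ?q) (h + 1) = ?E)"
      by (rule claim[OF step(1) xb xu fx B(5)[OF step(1)] fj])
    note Di = conjunct1[OF ci]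
    note Dj = conjunct1[OF cj]
    have "?i = ?j"
    proof (cases "?i = 0")
      case True
      then have "?D = 0" using Di by auto
      then have "?j = 0" using Dj by auto
      then show ?thesis using True by simp
    next
      case False
      then have "?D \<noteq> 0" using Di by auto
      then have jn: "?j \<noteq> 0" using Dj by auto
      note bi = mp[OF conjunct2[OF ci] False]
      note bj = mp[OF conjunct2[OF cj] jn]
      have "?i \<in> S n" using False A(5)[OF step(1)] by auto
      moreover have "?j \<in> S n" using jn B(5)[OF step(1)] by auto
      moreover have "bfun p \<Phi> f (?x + ?i * ?q) (h + 1) = bfun p \<Phi> f (?x + ?j * ?q) (h + 1)"
        using bi bj by (simp only:)
      ultimately show ?thesis using inj_onD[OF inj_b[OF step(1) xb xu]] by blast
    qed
    then show ?case using hX hY by simp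
  qed
  show ?thesis
  proof
    fix k
    have kle: "k \<le> 1 + \<Phi> (n0 + k)" using strict_mono_imp_increasing[OF sm, of "n0 + k"] by simp
    have "\<xi> k = \<xi> (1 + \<Phi> (n0 + k)) mod int p ^ k" using zp_mod[OF xz kle] by simp
    also have "... = int (X (n0 + k)) mod int p ^ k" unfolding X_def using A(1) by simp
    also have "... = int (Y (n0 + k)) mod int p ^ k" using eqn[of "n0 + k"] by simp
    also have "... = \<xi>' (1 + \<Phi> (n0 + k)) mod int p ^ k" unfolding Y_def using B(1) by simp
    also have "... = \<xi>' k" using zp_mod[OF xz' kle] by simp
    finally show "\<xi> k = \<xi>' k" .
  qed
qed

end


theorem theorem2:
  fixes p :: nat and \<Phi> :: "nat \<Rightarrow> nat" and f :: "(nat \<Rightarrow> int) \<Rightarrow> (nat \<Rightarrow> int)"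
    and h n0 u :: nat and S :: "nat \<Rightarrow> nat set"
  assumes "prime p"
    and "strict_mono \<Phi>"
    and "classF p \<Phi> f"
    and "u < p ^ (1 + \<Phi> n0)"
    and "f (zp_of_int p (int u)) (1 + h + n0) = 0"
    and "\<forall>n\<ge>n0. S n \<subseteq> {0<..<p ^ (\<Phi> (n + 1) - \<Phi> n)} \<and> card (S n) = p - 1"
    and "\<forall>n m. n \<ge> n0 \<and> m < p ^ (1 + \<Phi> n) \<and> m mod p ^ (1 + \<Phi> n0) = u mod p ^ (1 + \<Phi> n0) \<longrightarrow>
           (\<lambda>i. bfun p \<Phi> f (m + i * p ^ (1 + \<Phi> n)) (h + 1)) ` S n
           = (\<lambda>i. (int i * int p ^ h) mod int p ^ (h + 1)) ` {1 .. p - 1}"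
  shows "(\<exists>\<xi>\<in>zp p. f \<xi> = zp_zero
            \<and> \<xi> (1 + \<Phi> n0) = int u mod int p ^ (1 + \<Phi> n0)
            \<and> (\<forall>n\<ge>n0. rho p \<Phi> \<xi> (n + 1) \<in> insert 0 (S n)))
       \<and> ((\<forall>m. m \<ge> p ^ (1 + \<Phi> n0) \<and> m mod p ^ (1 + \<Phi> n0) = u mod p ^ (1 + \<Phi> n0) \<longrightarrow>
              bfun p \<Phi> f m h = 0)
          \<longrightarrow> (\<exists>!\<xi>. \<xi> \<in> zp p \<and> f \<xi> = zp_zero
               \<and> \<xi> (1 + \<Phi> n0) = int u mod int p ^ (1 + \<Phi> n0)
               \<and> (\<forall>n\<ge>n0. rho p \<Phi> \<xi> (n + 1) \<in> insert 0 (S n))))"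
proof -
  obtain \<xi> where E: "\<xi> \<in> zp p" "f \<xi> = zp_zero" "\<xi> (1 + \<Phi> n0) = int u mod int p ^ (1 + \<Phi> n0)"
      "\<forall>n\<ge>n0. rho p \<Phi> \<xi> (n + 1) \<in> insert 0 (S n)"
    using existence[OF assms(1-3) assms(6,7) assms(4,5)] by blast
  show ?thesis
  proof (intro conjI impI)
    show "\<exists>\<xi>\<in>zp p. f \<xi> = zp_zero
            \<and> \<xi> (1 + \<Phi> n0) = int u mod int p ^ (1 + \<Phi> n0)
            \<and> (\<forall>n\<ge>n0. rho p \<Phi> \<xi> (n + 1) \<in> insert 0 (S n))" using E by blast
  next
    assume H: "\<forall>m. m \<ge> p ^ (1 + \<Phi> n0) \<and> m mod p ^ (1 + \<Phi> n0) = u mod p ^ (1 + \<Phi> n0) \<longrightarrow>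
              bfun p \<Phi> f m h = 0"
    show "\<exists>!\<xi>. \<xi> \<in> zp p \<and> f \<xi> = zp_zero
               \<and> \<xi> (1 + \<Phi> n0) = int u mod int p ^ (1 + \<Phi> n0)
               \<and> (\<forall>n\<ge>n0. rho p \<Phi> \<xi> (n + 1) \<in> insert 0 (S n))"
    proof (rule ex1I)
      show "\<xi> \<in> zp p \<and> f \<xi> = zp_zero
               \<and> \<xi> (1 + \<Phi> n0) = int u mod int p ^ (1 + \<Phi> n0)
               \<and> (\<forall>n\<ge>n0. rho p \<Phi> \<xi> (n + 1) \<in> insert 0 (S n))" using E by blast
    next
      fix \<eta> assume "\<eta> \<in> zp p \<and> f \<eta> = zp_zero
               \<and> \<eta> (1 + \<Phi> n0) = int u mod int p ^ (1 + \<Phi> n0)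
               \<and> (\<forall>n\<ge>n0. rho p \<Phi> \<eta> (n + 1) \<in> insert 0 (S n))"
      then show "\<eta> = \<xi>"
        using uniq[OF assms(1-3) assms(6,7) H, of \<eta> \<xi>] E by blast
    qed
  qed
qed

end
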